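(* Let $d\ge2$ be an integer and $g(b,x):=b^d\big(\frac{1+x+x^2}{1+b+bx}\big)^d$ for $0\le b,x\le1$. For $b\in(0,1]$, the map $x\mapsto g(b,x)$ is increasing and convex on $(0,1]$ and has a unique fixed point $c_0=c_0(b)$ in $(0,1)$. Moreover, writing $g_b(x)=g(b,x)$, for every fixed $b\in(0,1]$ and every $0\le c<1$ the iterates $g_b^{(i)}(c)$ converge to $c_0(b)$ as $i\to\infty$. Also, $g_b(x)>x$ if and only if $x<c_0(b)$. *)

theory Defs
  imports "HOL-Analysis.Analysis"
begin

definition gfun :: "nat \<Rightarrow> real \<Rightarrow> real \<Rightarrow> real" where
  "gfun d b x = b ^ d * ((1 + x + x^2) / (1 + b + b * x)) ^ d"

end

theory Submission
  imports Defs
begin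

definition hh :: "real \<Rightarrow> real \<Rightarrow> real" where
  "hh b x = b * (1 + x + x^2) / (1 + b + b * x)"
definition hdv :: "real \<Rightarrow> real \<Rightarrow> real" where
  "hdv b x = 1 - (1 + b + b^2) / (1 + b + b * x)^2"
definition gd :: "nat \<Rightarrow> real \<Rightarrow> real \<Rightarrow> real" where
  "gd d b x = real d * (hdv b x * hh b x ^ (d - 1))"

lemma g_eq: "gfun d b x = hh b x ^ d"
  unfolding gfun_def hh_def by (simp add: power_mult_distrib[symmetric])

lemma hh_deriv:
  assumes "0 < b" "x > -1"
  shows "(hh b has_real_derivative hdv b x) (at x)"
proof -
  have u: "1 + b + b * x > 0" using assms
    using mult_pos_pos[of b "1+x"] by (simp add: algebra_simps)
  have "((\<lambda>x. b * (1 + x + x^2) / (1 + b + b * x)) has_real_derivative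
     ((b * (1 + 2 * x)) * (1 + b + b * x) - b * (1 + x + x^2) * b) / (1 + b + b * x)^2) (at x)"
    using u by (intro derivative_eq_intros) (auto simp: power2_eq_square)
  moreover have "((b * (1 + 2 * x)) * (1 + b + b * x) - b * (1 + x + x^2) * b) / (1 + b + b * x)^2 = hdv b x"
    using u unfolding hdv_def by (simp add: divide_simps power2_eq_square) (simp add: algebra_simps)
  ultimately show ?thesis unfolding hh_def[abs_def] by simp
qed

lemma g_deriv:
  assumes "0 < b" "x > -1"
  shows "(gfun d b has_real_derivative gd d b x) (at x)"
proof -
  have "((\<lambda>x. hh b x ^ d) has_real_derivative gd d b x) (at x)"
    unfolding gd_def using DERIV_power[OF hh_deriv[OF assms], of d] by simp
  then show ?thesis by (simp add: g_eq[abs_def])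
qed

lemma u_pos: "0 < (b::real) \<Longrightarrow> 0 \<le> x \<Longrightarrow> 0 < 1 + b + b * x"
  by (smt (verit) mult_nonneg_nonneg)

lemma hh_pos: "0 < b \<Longrightarrow> 0 \<le> x \<Longrightarrow> 0 < hh b x"
  unfolding hh_def using u_pos[of b x] by (simp add: add_pos_nonneg)

lemma hh_le1: "0 < b \<Longrightarrow> b \<le> 1 \<Longrightarrow> 0 \<le> x \<Longrightarrow> x \<le> 1 \<Longrightarrow> hh b x \<le> 1"
proof -
  assume a: "0 < b" "b \<le> 1" "0 \<le> x" "x \<le> 1"
  have "b * x^2 \<le> 1" using a by (simp add: mult_le_one power_le_one)
  then have "b * (1 + x + x^2) \<le> 1 + b + b * x" by (simp add: algebra_simps)
  then show ?thesis unfolding hh_def using u_pos[of b x] a by simp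
qed

lemma hh_mono: assumes "0 < b" "0 \<le> x" "x < y" shows "hh b x < hh b y"
proof -
  have ux: "0 < 1 + b + b * x" and uy: "0 < 1 + b + b * y" using u_pos[of b x] u_pos[of b y] assms by auto
  have pos: "0 < 1 + (x+y)*(1+b) + b*x*y" using assms by (simp add: add_pos_nonneg)
  have id: "(1+y+y^2)*(1+b+b*x) - (1+x+x^2)*(1+b+b*y) = (y-x)*(1 + (x+y)*(1+b) + b*x*y)"
    by (simp add: algebra_simps power2_eq_square)
  have "0 < (y-x)*(1 + (x+y)*(1+b) + b*x*y)" using pos assms by simp
  then have "(1+x+x^2)*(1+b+b*y) < (1+y+y^2)*(1+b+b*x)" using id by linarith
  then have "b*(1+x+x^2)*(1+b+b*y) < b*(1+y+y^2)*(1+b+b*x)" using assms(1) by simp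
  then show ?thesis unfolding hh_def using ux uy by (simp add: divide_simps)
qed

lemma hdv_mono: assumes "0 < b" "0 \<le> x" "x < y" shows "hdv b x < hdv b y"
proof -
  have ux: "0 < 1 + b + b * x" using u_pos assms by auto
  have "1 + b + b * x < 1 + b + b * y" using assms by simp
  then have "(1 + b + b * x)^2 < (1 + b + b * y)^2" using ux by (simp add: power_strict_mono)
  moreover have "0 < 1 + b + b^2" using assms by (simp add: add_pos_nonneg)
  ultimately have "(1 + b + b^2) / (1 + b + b * y)^2 < (1 + b + b^2) / (1 + b + b * x)^2"
    using ux by (intro divide_strict_left_mono) (auto intro!: mult_pos_pos)
  then show ?thesis unfolding hdv_def by simp
qed

lemma hdv_pos: assumes "0 < b" "0 \<le> x" shows "0 < hdv b x"
proof -
  have "(1 + b + b * 0)^2 \<le> (1 + b + b * x)^2" using assms by (simp add: power_mono)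
  moreover have "1 + b + b^2 < (1 + b + b * 0)^2" using assms by (simp add: power2_eq_square algebra_simps)
  ultimately have "1 + b + b^2 < (1 + b + b * x)^2" by linarith
  moreover have "0 < (1 + b + b * x)^2" using u_pos[of b x] assms by simp
  ultimately show ?thesis unfolding hdv_def by (simp add: divide_simps)
qed

lemma gd_mono: assumes "0 < b" "0 \<le> x" "x < y" "d \<ge> 1" shows "gd d b x < gd d b y"
proof -
  have hx: "0 < hh b x ^ (d-1)" using hh_pos assms by simp
  have "hh b x ^ (d-1) \<le> hh b y ^ (d-1)"
    using hh_mono[OF assms(1-3)] hh_pos[OF assms(1,2)] by (simp add: power_mono)
  then have "hdv b x * hh b x ^ (d-1) \<le> hdv b x * hh b y ^ (d-1)"
    using hdv_pos[OF assms(1,2)] by simp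
  also have "\<dots> < hdv b y * hh b y ^ (d-1)"
    using hdv_mono[OF assms(1-3)] hx \<open>hh b x ^ (d-1) \<le> hh b y ^ (d-1)\<close> by simp
  finally show ?thesis unfolding gd_def using assms by simp
qed

lemma keyL:
  assumes b: "0 < b" and d: "d \<ge> 1" and pqr: "0 \<le> p" "p < q" "q < r"
    and le: "gfun d b p - p \<le> gfun d b q - q"
  shows "gfun d b q - q < gfun d b r - r"
proof -
  have der: "((\<lambda>x. gfun d b x - x) has_real_derivative (gd d b x - 1)) (at x)" if "0 \<le> x" for x
    using g_deriv[of b x d] b that by (auto intro!: derivative_eq_intros)
  obtain z1 where z1: "p < z1" "z1 < q" "(gfun d b q - q) - (gfun d b p - p) = (q - p) * (gd d b z1 - 1)"
    using MVT2[of p q "\<lambda>x. gfun d b x - x" "\<lambda>x. gd d b x - 1"] der pqr by auto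
  obtain z2 where z2: "q < z2" "z2 < r" "(gfun d b r - r) - (gfun d b q - q) = (r - q) * (gd d b z2 - 1)"
    using MVT2[of q r "\<lambda>x. gfun d b x - x" "\<lambda>x. gd d b x - 1"] der pqr by auto
  have "0 \<le> gd d b z1 - 1"
    using z1 le pqr by (smt (verit) zero_le_mult_iff)
  moreover have "gd d b z1 < gd d b z2" using gd_mono[of b z1 z2 d] z1 z2 pqr b d by simp
  ultimately have "0 < (r - q) * (gd d b z2 - 1)" using pqr by simp
  then show ?thesis using z2 by simp
qed

lemma g_cont: "0 < b \<Longrightarrow> continuous_on {0..1} (gfun d b)"
  using g_deriv DERIV_isCont
  by (intro continuous_at_imp_continuous_on) (force)

lemma g_at0: "0 < b \<Longrightarrow> 0 < gfun d b 0"
  unfolding gfun_def by simp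

lemma g_at1: "0 < b \<Longrightarrow> b \<le> 1 \<Longrightarrow> gfun d b 1 \<le> 1"
  unfolding g_eq using hh_le1[of b 1] hh_pos[of b 1] by (simp add: power_le_one)

lemma g_at9: assumes "0 < b" "b \<le> 1" "d \<ge> 2" shows "gfun d b (9/10) < 9/10"
proof -
  have h0: "0 < hh b (9/10)" "hh b (9/10) \<le> 1" using hh_pos hh_le1 assms by auto
  have "hh b (9/10) \<le> 271/290" unfolding hh_def using assms by (simp add: divide_simps)
  then have "hh b (9/10) ^ 2 \<le> (271/290)^2" using h0 by (simp add: power_mono)
  moreover have "hh b (9/10) ^ d \<le> hh b (9/10) ^ 2" using h0 assms by (simp add: power_decreasing)
  moreover have "(271/290::real)^2 < 9/10" by (simp add: power2_eq_square)
  ultimately show ?thesis unfolding g_eq by linarith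
qed


lemma g_mono: assumes "0 < b" "d \<ge> 1" "0 \<le> x" "x < y" shows "gfun d b x < gfun d b y"
  unfolding g_eq using hh_mono[OF assms(1,3,4)] hh_pos[OF assms(1,3)] assms(2)
  by (intro power_strict_mono) auto

lemma g_mono_le: assumes "0 < b" "d \<ge> 1" "0 \<le> x" "x \<le> y" shows "gfun d b x \<le> gfun d b y"
  using g_mono[OF assms(1,2,3)] assms(4) by (metis order_le_less)

lemma lim_fix:
  assumes "0 < b" "X \<longlonglongrightarrow> L" "\<And>i. X (Suc i) = gfun d b (X i)" "L > -1"
  shows "gfun d b L = L"
proof -
  have "isCont (gfun d b) L" using g_deriv[OF assms(1,4)] DERIV_isCont by blast
  then have "(\<lambda>i. gfun d b (X i)) \<longlonglongrightarrow> gfun d b L"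
    using assms(2) isCont_tendsto_compose by blast
  moreover have "(\<lambda>i. gfun d b (X i)) \<longlonglongrightarrow> L"
    using LIMSEQ_Suc[OF assms(2)] assms(3) by simp
  ultimately show ?thesis using LIMSEQ_unique by blast
qed

theorem lemma6p1:
  fixes d :: nat and b :: real
  assumes "d \<ge> 2" and "0 < b" and "b \<le> 1"
  shows "strict_mono_on {0<..1} (gfun d b)
    \<and> convex_on {0<..1} (gfun d b)
    \<and> (\<exists>!c0. c0 \<in> {0<..<1} \<and> gfun d b c0 = c0)
    \<and> (\<forall>c0. c0 \<in> {0<..<1} \<and> gfun d b c0 = c0 \<longrightarrow>
          (\<forall>c. 0 \<le> c \<and> c < 1 \<longrightarrow> (\<lambda>i. (gfun d b ^^ i) c) \<longlonglongrightarrow> c0)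
        \<and> (\<forall>x\<in>{0..1}. gfun d b x > x \<longleftrightarrow> x < c0))"
proof -
  have d1: "d \<ge> 1" using assms by simp
  note b = assms(2) assms(3)
  define g where "g = gfun d b"
  have P1: "strict_mono_on {0<..1} g"
    unfolding g_def strict_mono_on_def using g_mono[OF b(1) d1] by auto
  have P2: "convex_on {0<..1} g"
  proof (rule convex_on_realI[where f' = "gd d b"])
    show "connected {0<..(1::real)}" by (simp add: is_interval_connected)
    show "(g has_real_derivative gd d b x) (at x)" if "x \<in> {0<..1}" for x
      unfolding g_def using g_deriv[OF b(1)] that by simp
    show "gd d b x \<le> gd d b y" if "x \<in> {0<..1}" "y \<in> {0<..1}" "x \<le> y" for x y
      using gd_mono[OF b(1) _ _ d1, of x y] that by (cases "x = y") auto
  qed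
  have uniq: "c = c'" if "c \<in> {0<..<1}" "g c = c" "c' \<in> {0<..<1}" "g c' = c'" for c c'
  proof (rule ccontr)
    assume ne: "c \<noteq> c'"
    have "gfun d b 1 - 1 > 0"
    proof (cases "c < c'")
      case True
      then have "gfun d b c' - c' < gfun d b 1 - 1"
        using keyL[OF b(1) d1, of c c' 1] that unfolding g_def by auto
      then show ?thesis using that unfolding g_def by simp
    next
      case False
      then have "c' < c" using ne by simp
      then have "gfun d b c - c < gfun d b 1 - 1"
        using keyL[OF b(1) d1, of c' c 1] that unfolding g_def by auto
      then show ?thesis using that unfolding g_def by simp
    qed
    then show False using g_at1[OF b, of d] by simp
  qed
  have ex: "\<exists>c. c \<in> {0<..<1} \<and> g c = c"
  proof -
    have cont: "continuous_on {0..9/10} (\<lambda>x. g x - x)"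
      unfolding g_def
      by (intro continuous_intros continuous_on_subset[OF g_cont[OF b(1)]]) auto
    obtain x where x: "0 \<le> x" "x \<le> 9/10" "g x - x = 0"
      using IVT2'[where f="\<lambda>x. g x - x" and a=0 and b="9/10" and y=0] cont g_at9[OF b assms(1)] g_at0[OF b(1), of d]
      unfolding g_def by auto
    have "x \<noteq> 0" using x g_at0[OF b(1), of d] unfolding g_def by auto
    then have "x \<in> {0<..<1}" using x by auto
    then show ?thesis using x by (intro exI[of _ x]) simp
  qed
  have P3: "\<exists>!c0. c0 \<in> {0<..<1} \<and> g c0 = c0" using ex uniq by blast
  have P4: "(\<forall>c. 0 \<le> c \<and> c < 1 \<longrightarrow> (\<lambda>i. (g ^^ i) c) \<longlonglongrightarrow> c0)
        \<and> (\<forall>x\<in>{0..1}. g x > x \<longleftrightarrow> x < c0)" if c0: "c0 \<in> {0<..<1}" "g c0 = c0" for c0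
  proof -
    have S: "g x > x \<longleftrightarrow> x < c0" if x: "0 \<le> x" "x \<le> 1" for x
    proof
      assume gx: "g x > x"
      show "x < c0"
      proof (rule ccontr)
        assume "\<not> x < c0"
        then have "c0 < x" using gx c0 by (cases "x = c0") auto
        moreover have "x < 1" using gx x g_at1[OF b, of d] unfolding g_def by (cases "x = 1") auto
        ultimately have "gfun d b x - x < gfun d b 1 - 1"
          using keyL[OF b(1) d1, of c0 x 1] c0 gx unfolding g_def by auto
        then show False using gx g_at1[OF b, of d] unfolding g_def by simp
      qed
    next
      assume xc: "x < c0"
      show "g x > x"
      proof (rule ccontr)
        assume "\<not> g x > x"
        then have "gfun d b c0 - c0 < gfun d b 1 - 1"
          using keyL[OF b(1) d1, of x c0 1] c0 xc x unfolding g_def by auto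
        then show False using c0 g_at1[OF b, of d] unfolding g_def by simp
      qed
    qed
    have gm: "g x \<le> g y" if "0 \<le> x" "x \<le> y" for x y
      unfolding g_def using g_mono_le[OF b(1) d1 that] .
    have conv: "(\<lambda>i. (g ^^ i) c) \<longlonglongrightarrow> c0" if c: "0 \<le> c" "c < 1" for c
    proof -
      define X where "X i = (g ^^ i) c" for i
      have XS: "X (Suc i) = g (X i)" for i unfolding X_def by simp
      have fixL: "L = c0" if "X \<longlonglongrightarrow> L" "0 < L" "L < 1" for L
      proof -
        have "g L = L" using lim_fix[OF b(1) that(1), of d] XS that(2) unfolding g_def by simp
        then show ?thesis using uniq[of L c0] that c0 by auto
      qed
      show ?thesis
      proof (cases "c \<le> c0")
        case True
        have inv: "0 \<le> X i \<and> X i \<le> c0" for i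
        proof (induction i)
          case 0 then show ?case using c True by (simp add: X_def)
        next
          case (Suc i)
          then have "g (X i) \<le> g c0" using gm by auto
          moreover have "0 \<le> g (X i)" using gm[of 0 "X i"] Suc g_at0[OF b(1), of d] unfolding g_def by auto
          ultimately show ?case using c0 XS by simp
        qed
        have step: "X i \<le> X (Suc i)" for i
        proof (cases "X i = c0")
          case True then show ?thesis using XS c0 by simp
        next
          case False
          then have "X i < c0" using inv[of i] by simp
          then show ?thesis using S[of "X i"] inv[of i] c0 XS by auto
        qed
        have "incseq X" using step by (simp add: incseq_SucI)
        then obtain L where L: "X \<longlonglongrightarrow> L" "\<forall>i. X i \<le> L"
          using incseq_convergent[of X c0] inv by blast
        have "L \<le> c0" using LIMSEQ_le_const2[OF L(1)] inv by blast
        moreover have "0 < L"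
        proof -
          have "0 < g (X 0)" using gm[of 0 "X 0"] inv g_at0[OF b(1), of d] unfolding g_def by force
          then show ?thesis using L(2) XS[of 0] by (metis less_le_trans)
        qed
        ultimately have "L = c0" using fixL L c0 by auto
        then show ?thesis using L(1) unfolding X_def[abs_def] by simp
      next
        case False
        have inv: "c0 \<le> X i \<and> X i \<le> c" for i
        proof (induction i)
          case 0 then show ?case using c False by (simp add: X_def)
        next
          case (Suc i)
          then have "g c0 \<le> g (X i)" using gm[of c0 "X i"] c0 by auto
          moreover have "\<not> g (X i) > X i" using S[of "X i"] Suc c0 c by auto
          ultimately show ?case using c0 XS Suc by simp
        qed
        have step: "X (Suc i) \<le> X i" for i
          using S[of "X i"] inv[of i] c0 c XS by auto
        have "decseq X" using step by (simp add: decseq_SucI)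
        then obtain L where L: "X \<longlonglongrightarrow> L" "\<forall>i. L \<le> X i"
          using decseq_convergent[of X c0] inv by blast
        have "c0 \<le> L" using LIMSEQ_le_const[OF L(1)] inv by blast
        moreover have "L \<le> c" using L(2)[rule_format, of 0] by (simp add: X_def)
        ultimately have "L = c0" using fixL L c0 c by auto
        then show ?thesis using L(1) unfolding X_def[abs_def] by simp
      qed
    qed
    show ?thesis using S conv by auto
  qed
  show ?thesis using P1 P2 P3 P4 unfolding g_def by blast
qed

end
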